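(* Let $V$ be a finite set and $\mathcal{F}\subseteq 2^V$ a minimal hereditary family with $\delta(\mathcal{F})\ge 12$. Then every $F\in\mathcal{F}$ satisfies $|F|\le 4$.
   Context: A family $\mathcal{F}\subseteq 2^V$ is hereditary if $F'\subseteq F\in\mathcal{F}$ implies $F'\in\mathcal{F}$. For $x\in V$, $d_{\mathcal{F}}(x)=|\{F\in\mathcal{F}: x\in F\}|$ and $\delta(\mathcal{F})=\min_{x\in V}d_{\mathcal{F}}(x)$. A set $F\in\mathcal{F}$ is maximal if no other member of $\mathcal{F}$ strictly contains it. A hereditary family $\mathcal{F}$ with $\delta(\mathcal{F})\ge 12$ is called minimal if for every maximal $F\in\mathcal{F}$ we have $\delta(\mathcal{F}\setminus\{F\})\le 11$. *)

theory Defs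
  imports Main
begin

definition hereditary :: "'a set set \<Rightarrow> bool" where
  "hereditary \<F> \<longleftrightarrow> (\<forall>F G. F \<in> \<F> \<longrightarrow> G \<subseteq> F \<longrightarrow> G \<in> \<F>)"

definition degree :: "'a set set \<Rightarrow> 'a \<Rightarrow> nat" where
  "degree \<F> x = card {F \<in> \<F>. x \<in> F}"

definition min_degree_ge :: "'a set \<Rightarrow> 'a set set \<Rightarrow> nat \<Rightarrow> bool" where
  "min_degree_ge V \<F> k \<longleftrightarrow> (\<forall>x\<in>V. degree \<F> x \<ge> k)"

definition maximal_member :: "'a set set \<Rightarrow> 'a set \<Rightarrow> bool" where
  "maximal_member \<F> F \<longleftrightarrow> F \<in> \<F> \<and> (\<forall>G\<in>\<F>. F \<subseteq> G \<longrightarrow> G = F)"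

definition minimal_family :: "'a set \<Rightarrow> 'a set set \<Rightarrow> bool" where
  "minimal_family V \<F> \<longleftrightarrow> hereditary \<F> \<and> min_degree_ge V \<F> 12 \<and>
     (\<forall>F. maximal_member \<F> F \<longrightarrow> (\<exists>x\<in>V. degree (\<F> - {F}) x \<le> 11))"

end

theory Submission
  imports Defs
begin

theorem mainTheorem5:
  fixes V :: "'a set" and \<F> :: "'a set set"
  assumes "finite V" and "\<F> \<subseteq> Pow V"
    and "minimal_family V \<F>"
  shows "\<forall>F\<in>\<F>. card F \<le> 4"
proof (rule ballI, rule ccontr)
  fix F assume FF: "F \<in> \<F>" and big: "\<not> card F \<le> 4"
  have her: "hereditary \<F>" and md: "min_degree_ge V \<F> 12"
    and mn: "\<forall>F. maximal_member \<F> F \<longrightarrow> (\<exists>x\<in>V. degree (\<F> - {F}) x \<le> 11)"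
    using assms(3) unfolding minimal_family_def by auto
  have finF: "finite \<F>" using assms(1,2) by (simp add: finite_subset)
  have finS: "\<And>G. G \<in> \<F> \<Longrightarrow> finite G" using assms(1,2) by (meson PowD finite_subset subsetD)
  define C where "C = {G\<in>\<F>. F \<subseteq> G}"
  have finC: "finite C" using finF C_def by simp
  have neC: "C \<noteq> {}" using FF C_def by auto
  obtain M where MC: "M \<in> C" and Mmax: "\<forall>G\<in>C. card G \<le> card M"
  proof -
    have "Max (card ` C) \<in> card ` C" using finC neC by simp
    then obtain M where "M \<in> C" "card M = Max (card ` C)" by auto
    moreover have "\<forall>G\<in>C. card G \<le> Max (card ` C)" using finC by simp
    ultimately show ?thesis using that by auto
  qed
  have MF: "M \<in> \<F>" and FM: "F \<subseteq> M" using MC C_def by auto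
  have maxm: "maximal_member \<F> M"
    unfolding maximal_member_def
  proof (intro conjI ballI impI)
    show "M \<in> \<F>" by (rule MF)
  next
    fix G assume G: "G \<in> \<F>" "M \<subseteq> G"
    then have "G \<in> C" using FM C_def by auto
    then have "card G \<le> card M" using Mmax by auto
    moreover have "finite G" using G finS by blast
    moreover have "card M \<le> card G" using card_mono[OF \<open>finite G\<close> G(2)] .
    ultimately show "G = M" using G card_subset_eq[of G M] by simp
  qed
  then obtain x where xV: "x \<in> V" and dx: "degree (\<F> - {M}) x \<le> 11" using mn by blast
  have finM: "finite M" using finS MF by blast
  have cM: "card M \<ge> 5" using big card_mono[OF finM FM] by linarith
  show False
  proof (cases "x \<in> M")
    case False
    have "{G \<in> \<F> - {M}. x \<in> G} = {G \<in> \<F>. x \<in> G}" using False by auto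
    then show False using dx md xV unfolding degree_def min_degree_ge_def by force
  next
    case True
    define A where "A = (insert x) ` Pow (M - {x})"
    have injA: "inj_on (insert x) (Pow (M - {x}))"
      unfolding inj_on_def by blast
    have cA: "card A = 2 ^ card (M - {x})"
      unfolding A_def using card_image[OF injA] finM by (simp add: card_Pow)
    have cMx: "card (M - {x}) \<ge> 4" using cM True finM by simp
    have "(2::nat) ^ 4 \<le> 2 ^ card (M - {x})" using cMx by (rule power_increasing) simp
    then have cA2: "card A \<ge> 16" using cA by simp
    have sub: "A - {M} \<subseteq> {G \<in> \<F> - {M}. x \<in> G}"
    proof
      fix G assume "G \<in> A - {M}"
      then obtain H where H: "H \<subseteq> M - {x}" "G = insert x H" "G \<noteq> M" unfolding A_def by auto
      have "G \<subseteq> M" using H True by auto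
      then have "G \<in> \<F>" using her MF unfolding hereditary_def by blast
      then show "G \<in> {G \<in> \<F> - {M}. x \<in> G}" using H by auto
    qed
    have fin2: "finite {G \<in> \<F> - {M}. x \<in> G}" using finF by simp
    have "card (A - {M}) \<le> 11" using card_mono[OF fin2 sub] dx unfolding degree_def by simp
    moreover have "card (A - {M}) \<ge> card A - 1" using diff_card_le_card_Diff[of "{M}" A] by simp
    ultimately show False using cA2 by linarith
  qed
qed

end
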